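(* Let $k\ge 2$ and let $\mathcal{U}_k$ be the graph with vertex set $\{v_1,\ldots,v_{3k-2}\}$ in which, for $i\ne j$, $v_i$ and $v_j$ are adjacent if and only if (up to swapping $i$ and $j$) one of the following holds: (1) $1\le i,j\le k$; (2) $1\le i\le k$ and $k+1\le j\le 2k-1$; (3) $k+1\le i\le 2k-1$ and $2k\le j\le 3k-2$; (4) $1\le i\le k-1$ and $2k\le j\le 3k-i-1$. Then $m(\mathcal{U}_k)=k+1$.
   Context: All graphs are finite, simple and undirected. A list assignment $L$ for a graph $G$ assigns to each vertex $v$ a set $L(v)$ of colors; an $L$-coloring is a proper vertex coloring $c$ of $G$ with $c(v)\in L(v)$ for every vertex $v$. A $k$-list assignment is a list assignment with $|L(v)|=k$ for all $v$. $G$ is uniquely $k$-list colorable (U$k$LC) if there exists a $k$-list assignment $L$ such that $G$ has exactly one $L$-coloring. $G$ has property $M(k)$ if it is not U$k$LC, i.e. for every $k$-list assignment $L$, $G$ has either no $L$-coloring or at least two $L$-colorings. The m-number $m(G)$ is the least integer $k\ge 1$ such that $G$ has property $M(k)$. (Every U$k$LC graph is also U$(k-1)$LC, so $G$ is U$k$LC iff $k<m(G)$.) *)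

theory Defs
  imports Main
begin

text \<open>A finite simple graph is given by a vertex set V and a symmetric,
irreflexive adjacency relation E (only its restriction to V matters).
Colours are natural numbers.\<close>

definition is_L_coloring :: "'a set \<Rightarrow> ('a \<Rightarrow> 'a \<Rightarrow> bool) \<Rightarrow> ('a \<Rightarrow> nat set) \<Rightarrow> ('a \<Rightarrow> nat) \<Rightarrow> bool" where
  "is_L_coloring V E L c \<longleftrightarrow>
     (\<forall>v\<in>V. c v \<in> L v) \<and> (\<forall>u\<in>V. \<forall>v\<in>V. E u v \<longrightarrow> c u \<noteq> c v)"

definition unique_L_coloring :: "'a set \<Rightarrow> ('a \<Rightarrow> 'a \<Rightarrow> bool) \<Rightarrow> ('a \<Rightarrow> nat set) \<Rightarrow> bool" where
  "unique_L_coloring V E L \<longleftrightarrow>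
     (\<exists>c. is_L_coloring V E L c \<and>
          (\<forall>c'. is_L_coloring V E L c' \<longrightarrow> (\<forall>v\<in>V. c' v = c v)))"

definition is_k_list_assignment :: "'a set \<Rightarrow> nat \<Rightarrow> ('a \<Rightarrow> nat set) \<Rightarrow> bool" where
  "is_k_list_assignment V k L \<longleftrightarrow> (\<forall>v\<in>V. finite (L v) \<and> card (L v) = k)"

definition uniquely_list_colorable :: "'a set \<Rightarrow> ('a \<Rightarrow> 'a \<Rightarrow> bool) \<Rightarrow> nat \<Rightarrow> bool" where
  "uniquely_list_colorable V E k \<longleftrightarrow>
     (\<exists>L. is_k_list_assignment V k L \<and> unique_L_coloring V E L)"

definition property_M :: "'a set \<Rightarrow> ('a \<Rightarrow> 'a \<Rightarrow> bool) \<Rightarrow> nat \<Rightarrow> bool" where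
  "property_M V E k \<longleftrightarrow> \<not> uniquely_list_colorable V E k"

definition m_number :: "'a set \<Rightarrow> ('a \<Rightarrow> 'a \<Rightarrow> bool) \<Rightarrow> nat" where
  "m_number V E = (LEAST k. 1 \<le> k \<and> property_M V E k)"

definition Uk_vertices :: "nat \<Rightarrow> nat set" where
  "Uk_vertices k = {1..3*k-2}"

definition Uk_rel :: "nat \<Rightarrow> nat \<Rightarrow> nat \<Rightarrow> bool" where
  "Uk_rel k i j \<longleftrightarrow>
     (1 \<le> i \<and> i \<le> k \<and> 1 \<le> j \<and> j \<le> k) \<or>
     (1 \<le> i \<and> i \<le> k \<and> k+1 \<le> j \<and> j \<le> 2*k-1) \<or>
     (k+1 \<le> i \<and> i \<le> 2*k-1 \<and> 2*k \<le> j \<and> j \<le> 3*k-2) \<or>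
     (1 \<le> i \<and> i \<le> k-1 \<and> 2*k \<le> j \<and> j \<le> 3*k-i-1)"

definition Uk_adj :: "nat \<Rightarrow> nat \<Rightarrow> nat \<Rightarrow> bool" where
  "Uk_adj k i j \<longleftrightarrow> i \<noteq> j \<and> (Uk_rel k i j \<or> Uk_rel k j i)"

end

theory Submission
  imports Defs Complex_Main "HOL-Library.FuncSet"
begin


definition wt :: "nat set \<Rightarrow> nat \<Rightarrow> real" where
  "wt S a = 1 / (\<Prod>b\<in>S-{a}. real a - real b)"

definition DD :: "nat set \<Rightarrow> (real \<Rightarrow> real) \<Rightarrow> real" where
  "DD S f = (\<Sum>a\<in>S. f (real a) * wt S a)"

lemma DD_shift:
  assumes "finite S" "c \<in> S"
  shows "DD S (\<lambda>t. (t - real c) * f t) = DD (S - {c}) f"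
proof -
  have "DD S (\<lambda>t. (t - real c) * f t) = (\<Sum>a\<in>S-{c}. (real a - real c) * f (real a) * wt S a)"
    unfolding DD_def using assms by (simp add: sum.remove)
  also have "\<dots> = (\<Sum>a\<in>S-{c}. f (real a) * wt (S-{c}) a)"
  proof (rule sum.cong)
    fix a assume a: "a \<in> S - {c}"
    have "S - {a} = insert c (S - {c} - {a})" using a assms by auto
    hence "(\<Prod>b\<in>S-{a}. real a - real b) = (real a - real c) * (\<Prod>b\<in>S-{c}-{a}. real a - real b)"
      using assms by simp
    moreover have "real a - real c \<noteq> 0" using a by simp
    ultimately show "(real a - real c) * f (real a) * wt S a = f (real a) * wt (S-{c}) a"
      unfolding wt_def by simp
  qed simp
  finally show ?thesis unfolding DD_def .
qed

lemma DD_diff: "DD S (\<lambda>t. f t - g t) = DD S f - DD S g"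
  unfolding DD_def by (simp add: sum_subtractf left_diff_distrib)

lemma DD_add: "DD S (\<lambda>t. f t + g t) = DD S f + DD S g"
  unfolding DD_def by (simp add: sum.distrib distrib_right)

lemma DD_cmult: "DD S (\<lambda>t. c * f t) = c * DD S f"
  unfolding DD_def by (simp add: sum_distrib_left mult.assoc)

lemma DD_single: "DD {d} f = f (real d)"
  unfolding DD_def wt_def by simp

lemma DD_one: "finite S \<Longrightarrow> card S = n \<Longrightarrow> n \<ge> 2 \<Longrightarrow> DD S (\<lambda>_. 1) = 0"
proof (induction n arbitrary: S rule: less_induct)
  case (less n)
  obtain c where c: "c \<in> S" using less by (metis card.empty card_gt_0_iff not_numeral_le_zero equals0I)
  have "card (S - {c}) \<ge> 1" using less c by simp
  then obtain d where d: "d \<in> S - {c}" by (metis card.empty equals0I not_one_le_zero)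
  have cd: "c \<noteq> d" "d \<in> S" using d by auto
  have e1: "DD S (\<lambda>t. (t - real c) * 1) = DD (S-{c}) (\<lambda>_. 1)" by (rule DD_shift) (use less c in auto)
  have e2: "DD S (\<lambda>t. (t - real d) * 1) = DD (S-{d}) (\<lambda>_. 1)" by (rule DD_shift) (use less cd in auto)
  have eq: "DD (S-{c}) (\<lambda>_. 1) = DD (S-{d}) (\<lambda>_. 1)"
  proof (cases "n = 2")
    case True
    have "S - {c} = {d}"
    proof -
      have "card (S-{c}) = 1" using less c True by simp
      then obtain z where z: "S - {c} = {z}" using card_1_singletonE by blast
      thus ?thesis using d by simp
    qed
    moreover have "S - {d} = {c}"
    proof -
      have "card (S-{d}) = 1" using less cd True by simp
      then obtain z where z: "S - {d} = {z}" using card_1_singletonE by blast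
      have "c \<in> S - {d}" using c cd by blast
      thus ?thesis using z by simp
    qed
    ultimately show ?thesis by (simp add: DD_single)
  next
    case False
    have "DD (S-{c}) (\<lambda>_. 1) = 0" using less.IH[of "n-1" "S-{c}"] less c False by simp
    moreover have "DD (S-{d}) (\<lambda>_. 1) = 0" using less.IH[of "n-1" "S-{d}"] less cd False by simp
    ultimately show ?thesis by simp
  qed
  have "DD S (\<lambda>t. (t - real c) * 1) - DD S (\<lambda>t. (t - real d) * 1) = 0" using e1 e2 eq by simp
  moreover have "DD S (\<lambda>t. (t - real c) * 1) - DD S (\<lambda>t. (t - real d) * 1) = DD S (\<lambda>t. (real d - real c) * 1)"
    by (subst DD_diff[symmetric]) (simp add: algebra_simps)
  ultimately have "(real d - real c) * DD S (\<lambda>_. 1) = 0" using DD_cmult[of S "real d - real c" "\<lambda>_. 1"] by simp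
  thus ?case using cd by simp
qed

lemma DD_pow: "finite S \<Longrightarrow> e + 2 \<le> card S \<Longrightarrow> DD S (\<lambda>t. t ^ e) = 0"
proof (induction e arbitrary: S)
  case 0
  then show ?case using DD_one[of S "card S"] by simp
next
  case (Suc e)
  obtain c where c: "c \<in> S" using Suc by (metis card.empty equals0I le_zero_eq add_is_0 zero_neq_numeral)
  have "DD S (\<lambda>t. t ^ Suc e) = DD S (\<lambda>t. (t - real c) * t ^ e + real c * t ^ e)"
    by (simp add: algebra_simps)
  also have "\<dots> = DD (S - {c}) (\<lambda>t. t ^ e) + real c * DD S (\<lambda>t. t ^ e)"
    by (simp add: DD_add DD_cmult DD_shift[OF Suc.prems(1) c])
  also have "\<dots> = 0" using Suc.IH[of "S - {c}"] Suc.IH[of S] Suc.prems c by simp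
  finally show ?case .
qed


definition Mon :: "nat set \<Rightarrow> (nat \<Rightarrow> nat set) \<Rightarrow> (nat \<Rightarrow> nat) \<Rightarrow> (nat \<Rightarrow> nat) \<Rightarrow> real" where
  "Mon V L e x = (\<Prod>v\<in>V. real (x v) ^ e v * wt (L v) (x v))"

lemma Mon_bump:
  assumes "finite V" "i \<in> V"
  shows "Mon V L (e(i := Suc (e i))) x = real (x i) * Mon V L e x"
proof -
  have "Mon V L (e(i := Suc (e i))) x = real (x i) ^ Suc (e i) * wt (L i) (x i) *
      (\<Prod>v\<in>V-{i}. real (x v) ^ (e(i := Suc (e i))) v * wt (L v) (x v))"
    unfolding Mon_def using assms by (simp add: prod.remove)
  also have "(\<Prod>v\<in>V-{i}. real (x v) ^ (e(i := Suc (e i))) v * wt (L v) (x v))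
     = (\<Prod>v\<in>V-{i}. real (x v) ^ e v * wt (L v) (x v))"
    by (rule prod.cong) auto
  also have "real (x i) ^ Suc (e i) * wt (L i) (x i) * (\<Prod>v\<in>V-{i}. real (x v) ^ e v * wt (L v) (x v))
     = real (x i) * (real (x i) ^ e i * wt (L i) (x i) * (\<Prod>v\<in>V-{i}. real (x v) ^ e v * wt (L v) (x v)))"
    by simp
  also have "real (x i) ^ e i * wt (L i) (x i) * (\<Prod>v\<in>V-{i}. real (x v) ^ e v * wt (L v) (x v)) = Mon V L e x"
    unfolding Mon_def using assms by (simp add: prod.remove)
  finally show ?thesis .
qed

lemma sum_bump:
  assumes "finite V" "i \<in> V"
  shows "sum (e(i := Suc (e i))) V = Suc (sum e V)"
proof -
  have "sum (e(i := Suc (e i))) V = Suc (e i) + sum (e(i := Suc (e i))) (V - {i})"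
    using assms by (simp add: sum.remove)
  also have "sum (e(i := Suc (e i))) (V - {i}) = sum e (V - {i})" by (rule sum.cong) auto
  also have "Suc (e i) + sum e (V - {i}) = Suc (sum e V)" using assms by (simp add: sum.remove)
  finally show ?thesis .
qed

lemma vanish:
  assumes V: "finite V" and L: "\<forall>v\<in>V. finite (L v)" and F: "finite F" "F \<subseteq> V \<times> V"
  and deg: "sum e V + card F < (\<Sum>v\<in>V. card (L v) - 1)"
  shows "(\<Sum>x\<in>PiE V L. Mon V L e x * (\<Prod>p\<in>F. real (x (fst p)) - real (x (snd p)))) = 0"
  using F deg
proof (induction F arbitrary: e rule: finite_induct)
  case empty
  obtain v where v: "v \<in> V" "e v < card (L v) - 1"
  proof (rule ccontr)
    assume "\<not> thesis"
    with that have "\<forall>v\<in>V. card (L v) - 1 \<le> e v" by force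
    hence "(\<Sum>v\<in>V. card (L v) - 1) \<le> sum e V" by (intro sum_mono) auto
    with empty show False by simp
  qed
  have "(\<Sum>x\<in>PiE V L. Mon V L e x) = (\<Prod>v\<in>V. \<Sum>a\<in>L v. real a ^ e v * wt (L v) a)"
    unfolding Mon_def by (rule prod_sum_PiE[symmetric]) (use V L in auto)
  also have "\<dots> = 0"
  proof (rule prod_zero)
    show "finite V" by (rule V)
    have "(\<Sum>a\<in>L v. real a ^ e v * wt (L v) a) = DD (L v) (\<lambda>t. t ^ e v)" unfolding DD_def by simp
    also have "\<dots> = 0" by (rule DD_pow) (use v L in auto)
    finally show "\<exists>a\<in>V. (\<Sum>aa\<in>L a. real aa ^ e a * wt (L a) aa) = 0" using v by blast
  qed
  finally show ?case by simp
next
  case (insert p F)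
  obtain i j where p: "p = (i, j)" by (cases p)
  have ij: "i \<in> V" "j \<in> V" using insert p by auto
  have FV: "F \<subseteq> V \<times> V" using insert by auto
  let ?Q = "\<lambda>x. (\<Prod>q\<in>F. real (x (fst q)) - real (x (snd q)))"
  have h1: "(\<Sum>x\<in>PiE V L. Mon V L (e(i := Suc (e i))) x * ?Q x) = 0"
    by (rule insert.IH) (use insert sum_bump[OF V ij(1), of e] FV in auto)
  have h2: "(\<Sum>x\<in>PiE V L. Mon V L (e(j := Suc (e j))) x * ?Q x) = 0"
    by (rule insert.IH) (use insert sum_bump[OF V ij(2), of e] FV in auto)
  have "(\<Sum>x\<in>PiE V L. Mon V L e x * (\<Prod>q\<in>insert p F. real (x (fst q)) - real (x (snd q))))
      = (\<Sum>x\<in>PiE V L. Mon V L (e(i := Suc (e i))) x * ?Q x - Mon V L (e(j := Suc (e j))) x * ?Q x)"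
  proof (rule sum.cong)
    fix x
    show "Mon V L e x * (\<Prod>q\<in>insert p F. real (x (fst q)) - real (x (snd q))) =
         Mon V L (e(i := Suc (e i))) x * ?Q x - Mon V L (e(j := Suc (e j))) x * ?Q x"
      using insert p by (simp add: Mon_bump[OF V ij(1)] Mon_bump[OF V ij(2)] algebra_simps)
  qed simp
  also have "\<dots> = 0" using h1 h2 by (simp add: sum_subtractf)
  finally show ?case .
qed


lemma no_unique:
  fixes V :: "nat set"
  assumes V: "finite V" and L: "\<forall>v\<in>V. finite (L v)" and F: "finite F" "F \<subseteq> V \<times> V"
  and Fadj: "\<forall>p\<in>F. Eadj (fst p) (snd p)"
  and cover: "\<forall>u\<in>V. \<forall>v\<in>V. Eadj u v \<longrightarrow> (u,v) \<in> F \<or> (v,u) \<in> F"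
  and deg: "card F < (\<Sum>v\<in>V. card (L v) - 1)"
  shows "\<not> unique_L_coloring V Eadj L"
proof
  assume "unique_L_coloring V Eadj L"
  then obtain \<phi> where col: "is_L_coloring V Eadj L \<phi>"
    and uniq: "\<And>c'. is_L_coloring V Eadj L c' \<Longrightarrow> \<forall>v\<in>V. c' v = \<phi> v"
    unfolding unique_L_coloring_def by blast
  define x0 where "x0 = restrict \<phi> V"
  let ?P = "\<lambda>x. (\<Prod>p\<in>F. real (x (fst p)) - real (x (snd p)))"
  let ?M = "Mon V L (\<lambda>_. 0)"
  have x0: "x0 \<in> PiE V L" using col unfolding x0_def is_L_coloring_def by auto
  have van: "(\<Sum>x\<in>PiE V L. ?M x * ?P x) = 0"
    by (rule vanish) (use V L F deg in auto)
  have zero: "?P x = 0" if x: "x \<in> PiE V L - {x0}" for x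
  proof -
    have notcol: "\<not> is_L_coloring V Eadj L x"
    proof
      assume "is_L_coloring V Eadj L x"
      hence "\<forall>v\<in>V. x v = \<phi> v" by (rule uniq)
      hence "x = x0" using x unfolding x0_def by (auto simp: PiE_def extensional_def)
      with x show False by simp
    qed
    have "\<forall>v\<in>V. x v \<in> L v" using x by (auto simp: PiE_iff)
    with notcol obtain u v where uv: "u \<in> V" "v \<in> V" "Eadj u v" "x u = x v"
      unfolding is_L_coloring_def by blast
    then obtain p where "p \<in> F" "x (fst p) = x (snd p)" using cover by force
    then show ?thesis using F by (intro prod_zero) auto
  qed
  have "(\<Sum>x\<in>PiE V L. ?M x * ?P x) = ?M x0 * ?P x0 + (\<Sum>x\<in>PiE V L - {x0}. ?M x * ?P x)"
    using x0 V L by (subst sum.remove[of _ x0]) (auto intro: finite_PiE)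
  also have "(\<Sum>x\<in>PiE V L - {x0}. ?M x * ?P x) = 0"
    by (rule sum.neutral) (use zero in auto)
  finally have "?M x0 * ?P x0 = 0" using van by simp
  moreover have "?M x0 \<noteq> 0"
    unfolding Mon_def wt_def using V L by (auto simp: prod_zero_iff)
  moreover have "?P x0 \<noteq> 0"
  proof -
    have "\<forall>p\<in>F. \<phi> (fst p) \<noteq> \<phi> (snd p)"
      using Fadj F col unfolding is_L_coloring_def by fastforce
    moreover have "\<forall>p\<in>F. x0 (fst p) = \<phi> (fst p) \<and> x0 (snd p) = \<phi> (snd p)"
      using F unfolding x0_def by auto
    ultimately show ?thesis using F by (auto simp: prod_zero_iff)
  qed
  ultimately show False by simp
qed


lemma adjAA: "1 \<le> a \<Longrightarrow> a \<le> k \<Longrightarrow> 1 \<le> a' \<Longrightarrow> a' \<le> k \<Longrightarrow> a \<noteq> a' \<Longrightarrow> Uk_adj k a a'"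
  unfolding Uk_adj_def Uk_rel_def by simp
lemma adjAB: "1 \<le> a \<Longrightarrow> a \<le> k \<Longrightarrow> k+1 \<le> b \<Longrightarrow> b \<le> 2*k-1 \<Longrightarrow> Uk_adj k a b"
  unfolding Uk_adj_def Uk_rel_def by simp
lemma adjBC: "k+1 \<le> b \<Longrightarrow> b \<le> 2*k-1 \<Longrightarrow> 2*k \<le> c \<Longrightarrow> c \<le> 3*k-2 \<Longrightarrow> Uk_adj k b c"
  unfolding Uk_adj_def Uk_rel_def by simp
lemma adjAC: "1 \<le> a \<Longrightarrow> a \<le> k-1 \<Longrightarrow> 2*k \<le> c \<Longrightarrow> c \<le> 3*k-a-1 \<Longrightarrow> Uk_adj k a c"
  unfolding Uk_adj_def Uk_rel_def by simp

definition Lk :: "nat \<Rightarrow> nat \<Rightarrow> nat set" where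
  "Lk k v = (if v \<le> k then {1..k} else if v \<le> 2*k-1 then insert v {1..k-1}
             else insert (3*k-v) {k+1..2*k-1})"

definition phik :: "nat \<Rightarrow> nat \<Rightarrow> nat" where
  "phik k v = (if v \<le> 2*k-1 then v else 3*k-v)"

lemma Lk_card:
  assumes "k \<ge> 2" "v \<in> Uk_vertices k"
  shows "finite (Lk k v) \<and> card (Lk k v) = k"
  using assms unfolding Lk_def Uk_vertices_def by auto

lemma phik_col:
  assumes "k \<ge> 2"
  shows "is_L_coloring (Uk_vertices k) (Uk_adj k) (Lk k) (phik k)"
  unfolding is_L_coloring_def
proof (intro conjI ballI impI)
  fix v assume "v \<in> Uk_vertices k"
  thus "phik k v \<in> Lk k v" using assms unfolding Lk_def phik_def Uk_vertices_def by auto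
next
  fix u v assume uv: "u \<in> Uk_vertices k" "v \<in> Uk_vertices k" "Uk_adj k u v"
  thus "phik k u \<noteq> phik k v"
    using assms unfolding phik_def Uk_vertices_def Uk_adj_def Uk_rel_def by auto
qed

lemma phik_uniq:
  assumes k: "k \<ge> 2" and psi: "is_L_coloring (Uk_vertices k) (Uk_adj k) (Lk k) \<psi>"
  shows "\<forall>v\<in>Uk_vertices k. \<psi> v = phik k v"
proof -
  have inL: "\<And>v. 1 \<le> v \<Longrightarrow> v \<le> 3*k-2 \<Longrightarrow> \<psi> v \<in> Lk k v"
    using psi unfolding is_L_coloring_def Uk_vertices_def by auto
  have prp: "\<And>u v. 1 \<le> u \<Longrightarrow> u \<le> 3*k-2 \<Longrightarrow> 1 \<le> v \<Longrightarrow> v \<le> 3*k-2 \<Longrightarrow> Uk_adj k u v \<Longrightarrow> \<psi> u \<noteq> \<psi> v"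
    using psi unfolding is_L_coloring_def Uk_vertices_def by auto
  have Ain: "\<psi> a \<in> {1..k}" if "a \<in> {1..k}" for a
    using inL[of a] that k unfolding Lk_def by auto
  have inj: "inj_on \<psi> {1..k}"
  proof (rule inj_onI)
    fix a a' assume "a \<in> {1..k}" "a' \<in> {1..k}" "\<psi> a = \<psi> a'"
    thus "a = a'" using prp[of a a'] adjAA[of a k a'] k by force
  qed
  have surj: "\<psi> ` {1..k} = {1..k}"
    by (rule endo_inj_surj) (use Ain inj in auto)
  have Bv: "\<psi> b = b" if b: "k+1 \<le> b" "b \<le> 2*k-1" for b
  proof (rule ccontr)
    assume ne: "\<psi> b \<noteq> b"
    have "\<psi> b \<in> insert b {1..k-1}" using inL[of b] b k unfolding Lk_def by auto
    hence "\<psi> b \<in> {1..k}" using ne by auto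
    then obtain a where a: "a \<in> {1..k}" "\<psi> a = \<psi> b" using surj by (metis imageE)
    moreover have "b \<le> 3*k-2" using b k by linarith
    ultimately show False using prp[of a b] adjAB[of a k b] b k by auto
  qed
  have Cv: "\<psi> c = 3*k - c" if c: "2*k \<le> c" "c \<le> 3*k-2" for c
  proof (rule ccontr)
    assume ne: "\<psi> c \<noteq> 3*k-c"
    have "\<not> c \<le> k" "\<not> c \<le> 2*k-1" "1 \<le> c" using c k by linarith+
    hence "\<psi> c \<in> insert (3*k-c) {k+1..2*k-1}" using inL[of c] c unfolding Lk_def by simp
    hence b: "\<psi> c \<in> {k+1..2*k-1}" using ne by auto
    hence "\<psi> (\<psi> c) = \<psi> c" using Bv by auto
    moreover have "\<psi> c \<le> 3*k-2"
    proof -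
      have "\<psi> c \<le> 2*k-1" using b by simp
      thus ?thesis by arith
    qed
    ultimately show False using prp[of "\<psi> c" c] adjBC[of k "\<psi> c" c] b c k by auto
  qed
  have Ale: "\<psi> a \<le> a" if a: "a \<in> {1..k}" for a
  proof (rule ccontr)
    assume "\<not> \<psi> a \<le> a"
    hence s: "a < \<psi> a" "\<psi> a \<le> k" using Ain[OF a] by auto
    define c where "c = 3*k - \<psi> a"
    have c: "2*k \<le> c" "c \<le> 3*k-2" "c \<le> 3*k-a-1" using s a unfolding c_def by auto
    have "\<psi> c = \<psi> a" using Cv[OF c(1,2)] s unfolding c_def by simp
    moreover have "Uk_adj k a c" by (rule adjAC) (use a s c in auto)
    ultimately show False using prp[of a c] a c k by auto
  qed
  have Aeq: "\<psi> a = a" if "a \<in> {1..k}" for a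
    using that
  proof (induction a rule: less_induct)
    case (less a)
    show ?case
    proof (rule ccontr)
      assume "\<psi> a \<noteq> a"
      hence lt: "\<psi> a < a" using Ale[OF less.prems] by simp
      have a': "\<psi> a \<in> {1..k}" using Ain[OF less.prems] .
      have "\<psi> (\<psi> a) = \<psi> a" using less.IH[OF lt a'] .
      hence "\<psi> a = a" using inj a' less.prems by (auto dest: inj_onD)
      with lt show False by simp
    qed
  qed
  show ?thesis
  proof
    fix v assume v: "v \<in> Uk_vertices k"
    show "\<psi> v = phik k v"
    proof (cases "v \<le> k")
      case True thus ?thesis using Aeq v unfolding phik_def Uk_vertices_def by auto
    next
      case F1: False
      show ?thesis
      proof (cases "v \<le> 2*k-1")
        case True thus ?thesis using Bv F1 unfolding phik_def by auto
      next
        case False thus ?thesis using Cv v unfolding phik_def Uk_vertices_def by auto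
      qed
    qed
  qed
qed

lemma Uk_ulc:
  assumes "k \<ge> 2"
  shows "is_k_list_assignment (Uk_vertices k) k (Lk k) \<and> unique_L_coloring (Uk_vertices k) (Uk_adj k) (Lk k)"
  using Lk_card[OF assms] phik_col[OF assms] phik_uniq[OF assms]
  unfolding is_k_list_assignment_def unique_L_coloring_def by blast

lemma mono_ulc:
  assumes L: "is_k_list_assignment V k L" and U: "unique_L_coloring V E L"
    and j: "1 \<le> j" "j \<le> k"
  shows "uniquely_list_colorable V E j"
proof -
  obtain \<phi> where col: "is_L_coloring V E L \<phi>"
    and uniq: "\<And>c'. is_L_coloring V E L c' \<Longrightarrow> \<forall>v\<in>V. c' v = \<phi> v"
    using U unfolding unique_L_coloring_def by blast
  define T where "T v = (SOME T. T \<subseteq> L v - {\<phi> v} \<and> card T = j - 1)" for v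
  have T: "T v \<subseteq> L v - {\<phi> v} \<and> card (T v) = j - 1" if v: "v \<in> V" for v
  proof -
    have fin: "finite (L v)" and c: "card (L v) = k" using L v unfolding is_k_list_assignment_def by auto
    have "\<phi> v \<in> L v" using col v unfolding is_L_coloring_def by auto
    hence "card (L v - {\<phi> v}) = k - 1" using fin c by simp
    hence "j - 1 \<le> card (L v - {\<phi> v})" using j by simp
    then obtain S where "S \<subseteq> L v - {\<phi> v}" "card S = j - 1" by (metis obtain_subset_with_card_n)
    hence "\<exists>S. S \<subseteq> L v - {\<phi> v} \<and> card S = j - 1" by blast
    thus ?thesis unfolding T_def by (rule someI_ex)
  qed
  define L' where "L' v = insert (\<phi> v) (T v)" for v
  have "is_k_list_assignment V j L'"
    unfolding is_k_list_assignment_def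
  proof
    fix v assume v: "v \<in> V"
    have fin: "finite (L v)" using L v unfolding is_k_list_assignment_def by auto
    have "finite (T v)" using T[OF v] fin by (meson finite_Diff finite_subset)
    moreover have "\<phi> v \<notin> T v" using T[OF v] by auto
    ultimately show "finite (L' v) \<and> card (L' v) = j" using T[OF v] j unfolding L'_def by simp
  qed
  moreover have "unique_L_coloring V E L'"
    unfolding unique_L_coloring_def
  proof (intro exI conjI allI impI)
    show "is_L_coloring V E L' \<phi>" using col unfolding is_L_coloring_def L'_def by auto
  next
    fix c' assume c': "is_L_coloring V E L' c'"
    have phiL: "\<forall>v\<in>V. \<phi> v \<in> L v" using col unfolding is_L_coloring_def by blast
    have "\<forall>v\<in>V. c' v \<in> L v"
    proof
      fix v assume v: "v \<in> V"
      have "c' v \<in> insert (\<phi> v) (T v)" using c' v unfolding is_L_coloring_def L'_def by blast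
      thus "c' v \<in> L v" using T[OF v] phiL v by auto
    qed
    hence "is_L_coloring V E L c'" using c' unfolding is_L_coloring_def by blast
    thus "\<forall>v\<in>V. c' v = \<phi> v" by (rule uniq)
  qed
  ultimately show ?thesis unfolding uniquely_list_colorable_def by blast
qed


definition Fk :: "nat \<Rightarrow> (nat \<times> nat) set" where
  "Fk k = {(i,j). i \<in> Uk_vertices k \<and> j \<in> Uk_vertices k \<and> i < j \<and> Uk_adj k i j}"

lemma Fk_card:
  assumes k: "k \<ge> 2"
  shows "card (Fk k) < (3*k-2)*k"
proof -
  define X14 where "X14 = {(i,j). 1 \<le> i \<and> i < j \<and> j \<le> k} \<union> {(i,j). 1 \<le> i \<and> i \<le> k-1 \<and> 2*k \<le> j \<and> j \<le> 3*k-i-1}"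
  define X2 where "X2 = {1..k} \<times> {k+1..2*k-1}"
  define X3 where "X3 = {k+1..2*k-1} \<times> {2*k..3*k-2}"
  define Off where "Off = ({1..k} \<times> {1..k}) - (\<lambda>a. (a,a)) ` {1..k}"
  have sub: "Fk k \<subseteq> X14 \<union> X2 \<union> X3"
  proof
    fix p assume "p \<in> Fk k"
    then obtain i j where p: "p = (i,j)" "1 \<le> i" "i < j" "j \<le> 3*k-2" "Uk_rel k i j \<or> Uk_rel k j i"
      unfolding Fk_def Uk_vertices_def Uk_adj_def by auto
    from p(5) show "p \<in> X14 \<union> X2 \<union> X3"
      unfolding Uk_rel_def X14_def X2_def X3_def using p(1-4) by auto
  qed
  have finX14: "finite X14"
  proof (rule finite_subset)
    show "X14 \<subseteq> {0..3*k} \<times> {0..3*k}" unfolding X14_def by auto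
  qed simp
  have "card X14 \<le> card Off"
  proof (rule card_inj_on_le[where f = "\<lambda>(i,j). if j \<le> k then (i,j) else (3*k-j, i)"])
    show "inj_on (\<lambda>(i,j). if j \<le> k then (i,j) else (3*k-j, i)) X14"
      unfolding X14_def by (auto simp: inj_on_def split: if_splits)
    show "(\<lambda>(i,j). if j \<le> k then (i,j) else (3*k-j, i)) ` X14 \<subseteq> Off"
      unfolding X14_def Off_def by (auto split: if_splits)
    show "finite Off" unfolding Off_def by simp
  qed
  also have "card Off = k*k - k"
  proof -
    have "card ((\<lambda>a. (a,a)) ` {1..k}) = k" by (subst card_image) (auto simp: inj_on_def)
    moreover have "(\<lambda>a. (a,a)) ` {1..k} \<subseteq> {1..k} \<times> {1..k}" by auto
    ultimately show ?thesis unfolding Off_def by (simp add: card_Diff_subset card_cartesian_product)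
  qed
  finally have c14: "card X14 \<le> k*k - k" .
  have c2: "card X2 = k*(k-1)" unfolding X2_def using k by (simp add: card_cartesian_product)
  have c3: "card X3 = (k-1)*(k-1)" unfolding X3_def using k by (simp add: card_cartesian_product)
  have "card (Fk k) \<le> card (X14 \<union> X2 \<union> X3)"
    by (rule card_mono) (use finX14 sub in \<open>auto simp: X2_def X3_def\<close>)
  also have "\<dots> \<le> card X14 + card X2 + card X3"
    by (meson card_Un_le add_le_mono le_trans order_refl)
  also have "\<dots> \<le> (k*k - k) + k*(k-1) + (k-1)*(k-1)" using c14 c2 c3 by (intro add_mono) auto
  also have "\<dots> < (3*k-2)*k"
  proof -
    obtain m where m: "k = m + 2" using k by (metis add.commute le_Suc_ex)
    show ?thesis unfolding m by (simp add: algebra_simps)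
  qed
  finally show ?thesis .
qed

lemma Uk_adj_sym: "Uk_adj k u v = Uk_adj k v u"
  unfolding Uk_adj_def by auto

lemma Uk_PM:
  assumes k: "k \<ge> 2"
  shows "property_M (Uk_vertices k) (Uk_adj k) (k+1)"
  unfolding property_M_def uniquely_list_colorable_def
proof
  assume "\<exists>L. is_k_list_assignment (Uk_vertices k) (k + 1) L \<and> unique_L_coloring (Uk_vertices k) (Uk_adj k) L"
  then obtain L where L: "is_k_list_assignment (Uk_vertices k) (k + 1) L"
    and U: "unique_L_coloring (Uk_vertices k) (Uk_adj k) L" by blast
  have finV: "finite (Uk_vertices k)" unfolding Uk_vertices_def by simp
  have FV: "Fk k \<subseteq> Uk_vertices k \<times> Uk_vertices k" unfolding Fk_def by auto
  have "\<not> unique_L_coloring (Uk_vertices k) (Uk_adj k) L"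
  proof (rule no_unique[where F = "Fk k"])
    show "finite (Uk_vertices k)" by (rule finV)
    show "\<forall>v\<in>Uk_vertices k. finite (L v)" using L unfolding is_k_list_assignment_def by auto
    show "finite (Fk k)" using FV finV by (meson finite_SigmaI finite_subset)
    show "Fk k \<subseteq> Uk_vertices k \<times> Uk_vertices k" by (rule FV)
    show "\<forall>p\<in>Fk k. Uk_adj k (fst p) (snd p)" unfolding Fk_def by auto
    show "\<forall>u\<in>Uk_vertices k. \<forall>v\<in>Uk_vertices k. Uk_adj k u v \<longrightarrow> (u, v) \<in> Fk k \<or> (v, u) \<in> Fk k"
    proof (intro ballI impI)
      fix u v assume uv: "u \<in> Uk_vertices k" "v \<in> Uk_vertices k" "Uk_adj k u v"
      hence "u \<noteq> v" unfolding Uk_adj_def by auto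
      thus "(u, v) \<in> Fk k \<or> (v, u) \<in> Fk k"
        using uv Uk_adj_sym[of k u v] unfolding Fk_def by (cases "u < v") auto
    qed
    have "(\<Sum>v\<in>Uk_vertices k. card (L v) - 1) = (\<Sum>v\<in>Uk_vertices k. k)"
      using L unfolding is_k_list_assignment_def by (intro sum.cong) auto
    also have "\<dots> = (3*k-2)*k" unfolding Uk_vertices_def by simp
    finally show "card (Fk k) < (\<Sum>v\<in>Uk_vertices k. card (L v) - 1)" using Fk_card[OF k] by simp
  qed
  with U show False by simp
qed

theorem mainTheorem18:
  fixes k :: nat
  assumes "k \<ge> 2"
  shows "m_number (Uk_vertices k) (Uk_adj k) = k + 1"
  unfolding m_number_def
proof (rule Least_equality)
  show "1 \<le> k + 1 \<and> property_M (Uk_vertices k) (Uk_adj k) (k + 1)" using Uk_PM[OF assms] by simp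
next
  fix y assume y: "1 \<le> y \<and> property_M (Uk_vertices k) (Uk_adj k) y"
  show "k + 1 \<le> y"
  proof (rule ccontr)
    assume "\<not> k + 1 \<le> y"
    hence "y \<le> k" by simp
    hence "uniquely_list_colorable (Uk_vertices k) (Uk_adj k) y"
      using Uk_ulc[OF assms] mono_ulc y by blast
    thus False using y unfolding property_M_def by simp
  qed
qed

end
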